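(* Let $f(z)=e^z$, let $K\subset\mathbb{C}\setminus\{0\}$ be compact, and let $U\subset\mathbb{C}$ be open and nonempty. Then there is $N\in\mathbb{N}$ such that $K\subset f^n(U)$ for all $n\geq N$.
   Context: $f^n$ denotes the $n$-th iterate of $f$. *)

theory Defs
  imports "HOL-Analysis.Analysis"
begin

end

theory Submission
  imports Defs "HOL-Complex_Analysis.Complex_Analysis"
begin

definition rbox :: "real \<Rightarrow> real \<Rightarrow> complex set" where
  "rbox c h = {z. \<bar>Re z - c\<bar> < h \<and> \<bar>Im z\<bar> < h}"

definition ann :: "real \<Rightarrow> real \<Rightarrow> complex set" where
  "ann r R = {z. r < norm z \<and> norm z < R}"

lemma lemA:
  assumes r: "0 < r" and X: "0 \<le> X" and RR: "r + X + 10 \<le> R"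
  shows "ann (exp (-X)) (exp X) \<subseteq> exp ` ann r R"
proof
  fix w assume "w \<in> ann (exp (-X)) (exp X)"
  then have w1: "exp (-X) < norm w" and w2: "norm w < exp X" by (auto simp: ann_def)
  then have w0: "w \<noteq> 0" by (metis exp_gt_zero norm_zero not_less_iff_gr_or_eq)
  define L where "L = Ln w"
  have ReL: "Re L = ln (norm w)" using w0 by (simp add: L_def)
  have "ln (norm w) < X" using w2 w0 by (metis ln_exp ln_less_cancel_iff exp_gt_zero zero_less_norm_iff)
  moreover have "-X < ln (norm w)" using w1 w0 by (metis ln_exp ln_less_cancel_iff exp_gt_zero zero_less_norm_iff)
  ultimately have aRe: "\<bar>Re L\<bar> < X" using ReL by auto
  define \<theta> where "\<theta> = Im L"
  have th1: "-pi < \<theta>" "\<theta> \<le> pi" using w0 by (auto simp: \<theta>_def L_def mpi_less_Im_Ln Im_Ln_le_pi)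
  define k where "k = \<lceil>(r + 1 - \<theta>) / (2*pi)\<rceil>"
  have k1: "(r + 1 - \<theta>) / (2*pi) \<le> of_int k" "of_int k < (r + 1 - \<theta>) / (2*pi) + 1"
    unfolding k_def by linarith+
  have k2: "r + 1 \<le> \<theta> + 2*pi * of_int k" using k1(1) pi_gt_zero by (simp add: field_simps)
  have k3: "\<theta> + 2*pi * of_int k < r + 1 + 2*pi" using k1(2) pi_gt_zero by (simp add: field_simps)
  define z where "z = L + \<i> * (of_int k * (of_real pi * 2))"
  have ez: "exp z = w" using w0 by (simp add: z_def L_def)
  have Imz: "Im z = \<theta> + 2*pi * of_int k" by (simp add: z_def \<theta>_def)
  have Rez: "Re z = Re L" by (simp add: z_def)
  have "norm z \<ge> \<bar>Im z\<bar>" by (rule abs_Im_le_cmod)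
  then have n1: "norm z > r" using Imz k2 by linarith
  have "norm z \<le> \<bar>Re z\<bar> + \<bar>Im z\<bar>" by (rule cmod_le)
  moreover have "\<bar>Im z\<bar> < r + 1 + 2*pi" using Imz k2 k3 r by linarith
  ultimately have "norm z < X + r + 1 + 2*pi" using Rez aRe by linarith
  then have n2: "norm z < R" using pi_less_4 RR by linarith
  show "w \<in> exp ` ann r R" using ez n1 n2 by (auto simp: ann_def)
qed

lemma lemC:
  assumes h: "pi < h"
  shows "ann (exp (c - h)) (exp (c + h)) \<subseteq> exp ` rbox c h"
proof
  fix w assume "w \<in> ann (exp (c-h)) (exp (c+h))"
  then have w1: "exp (c-h) < norm w" and w2: "norm w < exp (c+h)" by (auto simp: ann_def)
  then have w0: "w \<noteq> 0" by (metis exp_gt_zero norm_zero not_less_iff_gr_or_eq)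
  have ReL: "Re (Ln w) = ln (norm w)" using w0 by simp
  have "ln (norm w) < c + h" using w2 w0 by (metis ln_exp ln_less_cancel_iff exp_gt_zero zero_less_norm_iff)
  moreover have "c - h < ln (norm w)" using w1 w0 by (metis ln_exp ln_less_cancel_iff exp_gt_zero zero_less_norm_iff)
  moreover have "\<bar>Im (Ln w)\<bar> < h" using w0 h mpi_less_Im_Ln[of w] Im_Ln_le_pi[of w] by linarith
  ultimately have "Ln w \<in> rbox c h" using ReL by (auto simp: rbox_def)
  then show "w \<in> exp ` rbox c h" using w0 by (metis exp_Ln image_eqI)
qed

lemma lemB:
  assumes h: "0 < h" "h \<le> 1"
  shows "rbox (exp c) (exp c * h / 4) \<subseteq> exp ` rbox c h"
proof
  fix w assume "w \<in> rbox (exp c) (exp c * h / 4)"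
  then have w1: "\<bar>Re w - exp c\<bar> < exp c * h / 4" and w2: "\<bar>Im w\<bar> < exp c * h / 4"
    by (auto simp: rbox_def)
  have ec: "exp c > 0" by simp
  have "exp c * (1 - h/4) = exp c - exp c * h / 4" by (simp add: algebra_simps)
  then have Rew: "Re w > exp c * (1 - h/4)" using w1 by linarith
  have "0 < exp c * (1 - h/4)" using h by (intro mult_pos_pos) auto
  then have Rew0: "Re w > 0" using Rew by linarith
  then have w0: "w \<noteq> 0" by auto
  have "norm w \<le> \<bar>Re w\<bar> + \<bar>Im w\<bar>" by (rule cmod_le)
  moreover have "exp c * (1 + h/2) = exp c + exp c * h / 4 + exp c * h / 4" by (simp add: algebra_simps)
  ultimately have "norm w < exp c * (1 + h/2)" using w1 w2 Rew0 by linarith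
  also have "\<dots> \<le> exp c * exp h"
    using exp_ge_add_one_self[of h] h by (intro mult_left_mono) (linarith, simp)
  finally have n2: "norm w < exp (c + h)" by (simp add: exp_add)
  have eh: "exp (-h) \<le> 1 - h/4"
  proof -
    have "1 + h \<le> exp h" by (rule exp_ge_add_one_self)
    then have "exp (-h) \<le> 1 / (1+h)" using h by (simp add: exp_minus field_simps)
    also have "\<dots> \<le> 1 - h/4"
    proof -
      have "(1 - h/4) * (1+h) = 1 + h*(3-h)/4" by (simp add: field_simps)
      moreover have "h*(3-h) \<ge> 0" using h by (intro mult_nonneg_nonneg) auto
      ultimately have "1 \<le> (1 - h/4) * (1+h)" by linarith
      then show ?thesis using h by (simp add: divide_le_eq)
    qed
    finally show ?thesis .
  qed
  have "norm w \<ge> Re w" by (metis abs_ge_self abs_Re_le_cmod order_trans)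
  moreover have "exp (c - h) \<le> exp c * (1 - h/4)"
  proof -
    have "exp (c - h) = exp c * exp (-h)" by (simp add: exp_add[symmetric])
    then show ?thesis using mult_left_mono[OF eh, of "exp c"] by simp
  qed
  ultimately have n1: "exp (c - h) < norm w" using Rew by linarith
  have ReL: "Re (Ln w) = ln (norm w)" using w0 by simp
  have "ln (norm w) < c + h" using n2 w0 by (metis ln_exp ln_less_cancel_iff exp_gt_zero zero_less_norm_iff)
  moreover have "c - h < ln (norm w)" using n1 w0 by (metis ln_exp ln_less_cancel_iff exp_gt_zero zero_less_norm_iff)
  moreover have "\<bar>Im (Ln w)\<bar> < h"
  proof -
    have "Im (Ln w) = arctan (Im w / Re w)" using Rew0 w0 by (metis Arg_eq_Im_Ln arg_conv_arctan)
    moreover have "\<bar>Im w / Re w\<bar> < h"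
    proof -
      have "exp c * (1 - h/4) \<ge> exp c * (3/4)" using h ec by (intro mult_left_mono) auto
      then have "Re w > exp c * (3/4)" using Rew by linarith
      then have "Re w * h > exp c * (3/4) * h" using h by (intro mult_strict_right_mono) auto
      moreover have "exp c * (3/4) * h \<ge> exp c * h / 4" using h ec by (simp add: field_simps)
      ultimately have "\<bar>Im w\<bar> < Re w * h" using w2 by linarith
      then have iw: "\<bar>Im w\<bar> < h * Re w" by (simp add: mult.commute)
      have "\<bar>Im w / Re w\<bar> = \<bar>Im w\<bar> / Re w" using Rew0 by (simp add: abs_divide)
      also have "\<dots> < h" using iw by (subst pos_divide_less_eq[OF Rew0])
      finally show ?thesis .
    qed
    ultimately show ?thesis using abs_arctan_le[of "Im w / Re w"] by linarith
  qed
  ultimately have "Ln w \<in> rbox c h" using ReL by (auto simp: rbox_def)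
  then show "w \<in> exp ` rbox c h" using w0 by (metis exp_Ln image_eqI)
qed

lemma sum5: fixes f :: "nat \<Rightarrow> real" shows "(\<Sum>m<5. f m) = f 0 + f 1 + f 2 + f 3 + f 4"
  by (simp add: numeral_eq_Suc)
lemma sin5: fixes x :: real shows "\<bar>sin x - (x - x^3/6)\<bar> \<le> \<bar>x\<bar>^5/120"
proof -
  have c: "sin_coeff 0 = 0" "sin_coeff 1 = 1" "sin_coeff 2 = 0" "sin_coeff 3 = -1/6" "sin_coeff 4 = 0"
    by (simp_all add: sin_coeff_def numeral_3_eq_3)
  have 1: "(\<Sum>m<5. sin_coeff m * x ^ m) = x - x^3/6"
    unfolding sum5[of "\<lambda>m. sin_coeff m * x ^ m"] c by simp
  have f5: "fact 5 = (120::real)" by (simp add: fact_numeral)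
  have 2: "inverse (fact 5) * \<bar>x\<bar> ^ 5 = \<bar>x\<bar>^5/(120::real)"
    unfolding f5 by simp
  show ?thesis using Maclaurin_sin_bound[of x 5] unfolding 1 2 .
qed

lemma sin_pos_bound:
  fixes y :: real assumes "0 \<le> y"
  shows "\<bar>sin y\<bar> \<le> y * (1 - min (y^2) 1 / 7)"
proof (cases "y \<ge> 7/6")
  case True
  then have "y * (1 - min (y^2) 1 / 7) \<ge> 1"
  proof -
    have "y^2 \<ge> 1" by (rule one_le_power) (use True in simp)
    then have "min (y^2) 1 = 1" by simp
    then show ?thesis using True by simp
  qed
  then show ?thesis using abs_sin_le_one[of y] by linarith
next
  case False
  then have y1: "y \<le> 7/6" by simp
  have "sin y \<ge> 0" using assms y1 pi_ge_two by (intro sin_ge_zero) auto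
  moreover have "sin y - (y - y^3/6) \<le> y^5/120"
  proof -
    have "\<bar>y\<bar> = y" using assms by simp
    then have "\<bar>sin y - (y - y^3/6)\<bar> \<le> y^5/120" using sin5[of y] by simp
    then show ?thesis by (rule abs_le_D1)
  qed
  ultimately have s: "\<bar>sin y\<bar> \<le> y - y^3/6 + y^5/120" by simp
  have "y^2 \<le> (7/6)^2" using y1 assms by (intro power_mono) auto
  then have y2: "y^2 \<le> 49/36" by (simp add: power2_eq_square)
  show ?thesis
  proof (cases "y \<le> 1")
    case True
    have "y^2 \<le> 1" using True assms by (simp add: power_le_one)
    then have m: "min (y^2) 1 = y^2" by simp
    have e1: "y^5 = y^3 * y^2" by (simp add: eval_nat_numeral)
    have e2: "y * (1 - y^2/7) = y - y^3/7" by (simp add: eval_nat_numeral algebra_simps)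
    have a0: "y^3 \<ge> 0" using assms by simp
    have "y^3 * y^2 \<le> y^3 * 2" using \<open>y^2 \<le> 1\<close> a0 by (intro mult_left_mono) auto
    then have "y - y^3/6 + y^5/120 \<le> y * (1 - y^2/7)" unfolding e1 e2 using a0 by linarith
    then show ?thesis using s m by simp
  next
    case False
    then have "y^2 \<ge> 1" by (intro one_le_power) simp
    then have m: "min (y^2) 1 = 1" by simp
    have e1: "y^5 = y * (y^2 * y^2)" by (simp add: eval_nat_numeral)
    have e2: "y^3 = y * y^2" by (simp add: eval_nat_numeral)
    have bb: "y^2 * y^2 \<le> y^2 * (49/36)" using y2 by (intro mult_left_mono) auto
    have b: "y * (y^2*y^2) \<le> y * (y^2 * (49/36))" using mult_left_mono[OF bb assms] .
    have c: "y * (y^2 * (49/36)) = (49/36) * (y * y^2)" by simp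
    have d: "y * y^2 \<ge> y * 1" using \<open>y^2 \<ge> 1\<close> assms by (intro mult_left_mono) auto
    have f: "y * (1 - 1/7) = 6/7 * y" by simp
    have "y - y^3/6 + y^5/120 \<le> y * (1 - 1/7)" unfolding e1 e2 f using b c d assms by linarith
    then show ?thesis using s m by simp
  qed
qed

lemma sin_bound_phi:
  fixes y :: real
  shows "\<bar>sin y\<bar> * (1 + min (y^2) 1 / 7) \<le> \<bar>y\<bar>"
proof -
  have "\<bar>sin \<bar>y\<bar>\<bar> = \<bar>sin y\<bar>" by (cases "y \<ge> 0") auto
  moreover have "\<bar>y\<bar>^2 = y^2" by simp
  ultimately have s: "\<bar>sin y\<bar> \<le> \<bar>y\<bar> * (1 - min (y^2) 1 / 7)" using sin_pos_bound[of "\<bar>y\<bar>"] by simp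
  define p where "p = min (y^2) 1 / 7"
  have p: "0 \<le> p" "p \<le> 1" by (auto simp: p_def)
  have "\<bar>sin y\<bar> * (1 + p) \<le> \<bar>y\<bar> * (1 - p) * (1 + p)" using s p by (intro mult_right_mono) (auto simp: p_def)
  also have "\<dots> = \<bar>y\<bar> * (1 - p*p)" by (simp add: algebra_simps)
  also have "\<dots> \<le> \<bar>y\<bar>" using p by (simp add: mult_left_le)
  finally show ?thesis by (simp add: p_def)
qed

lemma exp_half_ge: "exp (t::real) / 2 \<ge> t + 1/4"
proof (cases "t \<le> 1/2")
  case True then show ?thesis using exp_ge_add_one_self[of t] by linarith
next
  case False
  then have "1 + t + t^2/2 \<le> exp t" by (intro exp_lower_Taylor_quadratic) auto
  moreover have "(t - 1)^2 \<ge> 0" by simp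
  moreover have "(t-1)^2 = t^2 - 2*t + 1" by (simp add: power2_eq_square algebra_simps)
  ultimately show ?thesis by linarith
qed

lemma cos_half: "\<bar>y::real\<bar> < 1/2 \<Longrightarrow> cos y \<ge> 1/2"
proof -
  assume a: "\<bar>y\<bar> < 1/2"
  have "cos (pi/3) \<le> cos \<bar>y\<bar>" using a pi_ge_two by (intro cos_monotone_0_pi_le) auto
  moreover have "cos \<bar>y\<bar> = cos y" by (cases "y \<ge> 0") auto
  ultimately show ?thesis by (simp add: cos_60)
qed

lemma prod_ge_sum: fixes n :: nat and a :: "nat \<Rightarrow> real" shows "(\<forall>j<n. (0::real) \<le> a j) \<Longrightarrow> (\<Prod>j<n. 1 + a j) \<ge> 1 + (\<Sum>j<n. a j)"
proof (induction n)
  case 0 then show ?case by simp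
next
  case (Suc n)
  then have IH: "(\<Prod>j<n. 1 + a j) \<ge> 1 + (\<Sum>j<n. a j)" by simp
  have an: "0 \<le> a n" using Suc.prems by simp
  have S: "0 \<le> (\<Sum>j<n. a j)" using Suc.prems by (intro sum_nonneg) auto
  have "(\<Prod>j<Suc n. 1 + a j) = (\<Prod>j<n. 1 + a j) * (1 + a n)" by simp
  also have "\<dots> \<ge> (1 + (\<Sum>j<n. a j)) * (1 + a n)" using IH an by (intro mult_right_mono) auto
  finally have "(\<Prod>j<Suc n. 1 + a j) \<ge> (1 + (\<Sum>j<n. a j)) * (1 + a n)" .
  moreover have "(1 + (\<Sum>j<n. a j)) * (1 + a n) \<ge> 1 + (\<Sum>j<Suc n. a j)"
    using S an by (simp add: algebra_simps)
  ultimately show ?case by linarith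
qed

lemma orbit_unbounded:
  fixes z :: complex
  shows "\<not> (\<exists>M. \<forall>n. (\<Prod>j<n. exp (Re ((exp ^^ j) z))) \<le> M)"
proof
  assume "\<exists>M. \<forall>n. (\<Prod>j<n. exp (Re ((exp ^^ j) z))) \<le> M"
  then obtain M where M: "\<And>n. (\<Prod>j<n. exp (Re ((exp ^^ j) z))) \<le> M" by blast
  define w where "w n = (exp ^^ n) z" for n
  define x where "x n = Re (w n)" for n
  define y where "y n = Im (w n)" for n
  have wS: "w (Suc n) = exp (w n)" for n by (simp add: w_def)
  have yS: "y (Suc n) = exp (x n) * sin (y n)" for n by (simp add: y_def x_def wS Im_exp)
  have xS: "x (Suc n) = exp (x n) * cos (y n)" for n by (simp add: y_def x_def wS Re_exp)
  define Q where "Q n = (\<Prod>j<n. exp (x j))" for n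
  have QM: "Q n \<le> M" for n using M[of n] by (simp add: Q_def x_def w_def)
  have QS: "Q (Suc n) = exp (x n) * Q n" for n by (simp add: Q_def mult.commute)
  have Qpos: "Q n > 0" for n by (simp add: Q_def prod_pos)
  define \<phi> where "\<phi> t = min (t^2) 1 / 7" for t :: real
  have \<phi>nn: "0 \<le> \<phi> t" for t by (simp add: \<phi>_def)
  have sb: "\<bar>sin t\<bar> * (1 + \<phi> t) \<le> \<bar>t\<bar>" for t using sin_bound_phi[of t] by (simp add: \<phi>_def)
  define s where "s = \<bar>sin (y 0)\<bar>"
  define P where "P n = (\<Prod>j<n. 1 + \<phi> (y (Suc j)))" for n
  have Pnn: "P n \<ge> 0" for n by (simp add: P_def prod_nonneg \<phi>nn add_nonneg_nonneg)
  have claim1: "Q (Suc n) * s \<ge> \<bar>y (Suc n)\<bar> * P n" for n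
  proof (induction n)
    case 0 then show ?case by (simp add: Q_def s_def yS abs_mult P_def)
  next
    case (Suc n)
    have "Q (Suc (Suc n)) * s = exp (x (Suc n)) * (Q (Suc n) * s)" by (simp add: QS)
    also have "\<dots> \<ge> exp (x (Suc n)) * (\<bar>y (Suc n)\<bar> * P n)"
      using Suc.IH by (intro mult_left_mono) auto
    finally have 1: "Q (Suc (Suc n)) * s \<ge> exp (x (Suc n)) * (\<bar>y (Suc n)\<bar> * P n)" .
    have 2: "\<bar>sin (y (Suc n))\<bar> * (1 + \<phi> (y (Suc n))) * P n \<le> \<bar>y (Suc n)\<bar> * P n"
      using sb[of "y (Suc n)"] Pnn[of n] by (intro mult_right_mono) auto
    have 3: "exp (x (Suc n)) * (\<bar>sin (y (Suc n))\<bar> * (1 + \<phi> (y (Suc n))) * P n) \<le> exp (x (Suc n)) * (\<bar>y (Suc n)\<bar> * P n)"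
      using 2 by (intro mult_left_mono) auto
    have 4: "exp (x (Suc n)) * (\<bar>sin (y (Suc n))\<bar> * (1 + \<phi> (y (Suc n))) * P n) = \<bar>y (Suc (Suc n))\<bar> * P (Suc n)"
      by (simp add: yS abs_mult P_def mult_ac)
    show ?case using 1 3 4 by linarith
  qed
  have claim2: "\<exists>n0. \<forall>n\<ge>n0. \<bar>y n\<bar> < 1/2"
  proof (cases "s = 0")
    case True
    then have "sin (y 0) = 0" by (simp add: s_def)
    have y0: "y (Suc n) = 0" for n
    proof (induction n)
      case 0 then show ?case using \<open>sin (y 0) = 0\<close> by (simp add: yS)
    next
      case (Suc n) then show ?case by (simp add: yS)
    qed
    have "\<bar>y n\<bar> < 1/2" if "n \<ge> 1" for n using y0 that by (cases n) auto
    then show ?thesis by blast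
  next
    case False
    then have s0: "s > 0" by (simp add: s_def)
    define T where "T n = (\<Sum>j<n. \<phi> (y (Suc j)))" for n
    have PT: "P n \<ge> 1 + T n" for n unfolding P_def T_def by (rule prod_ge_sum) (simp add: \<phi>nn)
    have key: "\<bar>y (Suc n)\<bar> * (1 + T n) \<le> M * s" for n
    proof -
      have "\<bar>y (Suc n)\<bar> * (1 + T n) \<le> \<bar>y (Suc n)\<bar> * P n" using PT[of n] by (intro mult_left_mono) auto
      also have "\<dots> \<le> Q (Suc n) * s" by (rule claim1)
      also have "\<dots> \<le> M * s" using QM[of "Suc n"] s0 by (intro mult_right_mono) auto
      finally show ?thesis .
    qed
    show ?thesis
    proof (cases "\<exists>B. \<forall>n. T n \<le> B")
      case True
      then obtain B where B: "\<And>n. T n \<le> B" by blast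
      have "summable (\<lambda>j. \<phi> (y (Suc j)))"
      proof (rule summableI_nonneg_bounded)
        show "0 \<le> \<phi> (y (Suc n))" for n by (rule \<phi>nn)
        show "(\<Sum>i<n. \<phi> (y (Suc i))) \<le> B" for n using B[of n] by (simp add: T_def)
      qed
      then have "(\<lambda>j. \<phi> (y (Suc j))) \<longlonglongrightarrow> 0" by (rule summable_LIMSEQ_zero)
      then have "eventually (\<lambda>j. \<phi> (y (Suc j)) < 1/28) sequentially"
        by (rule order_tendstoD(2)) simp
      then obtain n1 where n1: "\<And>j. j \<ge> n1 \<Longrightarrow> \<phi> (y (Suc j)) < 1/28"
        by (auto simp: eventually_sequentially)
      have "\<bar>y n\<bar> < 1/2" if nn: "n \<ge> Suc n1" for n
      proof (rule ccontr)
        assume "\<not> \<bar>y n\<bar> < 1/2"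
        then have "\<bar>y n\<bar> \<ge> 1/2" by simp
        then have "\<bar>y n\<bar>^2 \<ge> (1/2)^2" by (intro power_mono) auto
        then have "y n ^2 \<ge> 1/4" by (simp add: power2_eq_square)
        then have "\<phi> (y n) \<ge> 1/28" by (simp add: \<phi>_def)
        moreover obtain j where j: "n = Suc j" "j \<ge> n1" using nn by (cases n) auto
        ultimately show False using n1[OF j(2)] unfolding j(1) by linarith
      qed
      then show ?thesis by blast
    next
      case False
      then have "\<not> (\<forall>n. T n \<le> 2 * (M * s))" by blast
      then obtain n1 where "\<not> T n1 \<le> 2 * (M * s)" by blast
      then have n1: "T n1 > 2 * (M * s)" by simp
      have Tmono: "T n \<ge> T n1" if "n \<ge> n1" for n
        unfolding T_def using that by (intro sum_mono2) (auto simp: \<phi>nn)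
      have "\<bar>y n\<bar> < 1/2" if nn: "n \<ge> Suc n1" for n
      proof (rule ccontr)
        assume "\<not> \<bar>y n\<bar> < 1/2"
        then have yn: "\<bar>y n\<bar> \<ge> 1/2" by simp
        obtain j where j: "n = Suc j" "j \<ge> n1" using nn by (cases n) auto
        have Tj: "T j > 2 * (M * s)" using Tmono[OF j(2)] n1 by linarith
        have "T j \<ge> 0" by (simp add: T_def sum_nonneg \<phi>nn)
        have "\<bar>y n\<bar> * (1 + T j) \<ge> 1/2 * (1 + T j)" using yn \<open>T j \<ge> 0\<close> by (intro mult_right_mono) auto
        then show False using key[of j] j Tj by simp
      qed
      then show ?thesis by blast
    qed
  qed
  then obtain n0 where n0: "\<And>n. n \<ge> n0 \<Longrightarrow> \<bar>y n\<bar> < 1/2" by blast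
  have xstep: "x (Suc n) \<ge> x n + 1/4" if "n \<ge> n0" for n
  proof -
    have "cos (y n) \<ge> 1/2" using n0[OF that] by (rule cos_half)
    then have "exp (x n) * cos (y n) \<ge> exp (x n) * (1/2)" by (intro mult_left_mono) auto
    moreover have "exp (x n) * (1/2) = exp (x n) / 2" by simp
    ultimately show ?thesis using exp_half_ge[of "x n"] xS[of n] by linarith
  qed
  have xlin: "x (n0 + k) \<ge> x n0 + real k / 4" for k
  proof (induction k)
    case 0 then show ?case by simp
  next
    case (Suc k)
    have e1: "n0 + Suc k = Suc (n0 + k)" by simp
    have e2: "real (Suc k) / 4 = real k / 4 + 1/4" by (simp add: add_divide_distrib)
    show ?case unfolding e1 e2 using Suc.IH xstep[of "n0 + k"] by linarith
  qed
  define k0 where "k0 = nat \<lceil>4 * (1 - x n0)\<rceil>"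
  define n2 where "n2 = n0 + k0"
  have big: "exp (x n) \<ge> 2" if "n \<ge> n2" for n
  proof -
    define k where "k = n - n0"
    have k: "n = n0 + k" "k \<ge> k0" using that unfolding n2_def k_def by auto
    have "real k \<ge> 4 * (1 - x n0)" using k(2) unfolding k0_def by linarith
    then have "x n \<ge> 1" using xlin[of k] k(1) by simp
    then have "exp (x n) \<ge> exp 1" by simp
    moreover have "exp (1::real) \<ge> 2" using exp_ge_add_one_self[of 1] by simp
    ultimately show ?thesis by linarith
  qed
  have Qgrow: "Q (n2 + k) \<ge> 2^k * Q n2" for k
  proof (induction k)
    case 0 then show ?case by simp
  next
    case (Suc k)
    have "Q (n2 + Suc k) = exp (x (n2 + k)) * Q (n2 + k)" by (simp add: QS)
    also have "\<dots> \<ge> 2 * (2^k * Q n2)" using big[of "n2+k"] Suc.IH Qpos[of "n2+k"] Qpos[of n2]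
      by (intro mult_mono) auto
    finally show ?case by simp
  qed
  obtain k where "M / Q n2 < 2^k" using real_arch_pow[of 2 "M / Q n2"] by auto
  then have "M < 2^k * Q n2" using Qpos[of n2] by (simp add: divide_less_eq)
  then show False using Qgrow[of k] QM[of "n2 + k"] by linarith
qed


lemma rbox_mono: "h \<le> h' \<Longrightarrow> rbox c h \<subseteq> rbox c h'"
  by (auto simp: rbox_def)

lemma ann_mono: "X \<le> Y \<Longrightarrow> ann (exp (-X)) (exp X) \<subseteq> ann (exp (-Y)) (exp Y)"
  unfolding ann_def by auto (meson exp_le_cancel_iff le_less_trans neg_le_iff_le, meson exp_le_cancel_iff less_le_trans)

lemma ann_step:
  assumes "7 \<le> X"
  shows "ann (exp (-(X+1))) (exp (X+1)) \<subseteq> exp ` ann (exp (-X)) (exp X)"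
proof (rule lemA)
  show "0 < exp (-X)" by simp
  show "0 \<le> X + 1" using assms by simp
  have "exp (-X) \<le> 1" using assms by simp
  moreover have "1 + X + X^2/2 \<le> exp X" using assms by (intro exp_lower_Taylor_quadratic) simp
  moreover have "X^2 \<ge> 7^2" using assms by (intro power_mono) auto
  then have "X^2 \<ge> 49" by simp
  ultimately show "exp (-X) + (X + 1) + 10 \<le> exp X" by linarith
qed

lemma iter_img: "(exp ^^ Suc n) ` U = exp ` ((exp ^^ n) ` (U::complex set))"
  by (simp add: image_comp)

lemma iter_open:
  assumes "open (U::complex set)" shows "open ((exp ^^ n) ` U)"
proof (induction n)
  case 0 then show ?case using assms by simp
next
  case (Suc n)
  have nc: "\<not> exp constant_on (UNIV::complex set)"
  proof
    assume "exp constant_on (UNIV::complex set)"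
    then obtain c where "\<And>x::complex. exp x = c" by (auto simp: constant_on_def)
    then have "exp (0::complex) = exp (\<i> * pi)" by metis
    then show False by (simp add: exp_Euler)
  qed
  have "open (exp ` ((exp ^^ n) ` U))"
    by (rule open_mapping_thm[of exp UNIV]) (use Suc nc in \<open>auto intro: holomorphic_intros\<close>)
  then show ?case unfolding iter_img .
qed

lemma iter_deriv:
  "((exp ^^ n) has_field_derivative (\<Prod>j<n. exp ((exp ^^ j) z))) (at (z::complex))"
proof (induction n)
  case 0 then show ?case by simp
next
  case (Suc n)
  have "((\<lambda>x. exp ((exp ^^ n) x)) has_field_derivative exp ((exp ^^ n) z) * (\<Prod>j<n. exp ((exp ^^ j) z))) (at z)"
    by (rule DERIV_chain2[OF DERIV_exp Suc.IH])
  then show ?case by (simp add: mult.commute)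
qed

lemma iter_holo: "(exp ^^ n) holomorphic_on (S::complex set)"
  unfolding holomorphic_on_def field_differentiable_def
  using iter_deriv has_field_derivative_at_within by blast

lemma crux:
  fixes a :: complex
  assumes "0 < \<delta>"
  shows "\<exists>n. \<exists>z\<in>ball a \<delta>. sin (Im ((exp ^^ n) z)) = 0"
proof -
  obtain n where n: "(\<Prod>j<n. exp (Re ((exp ^^ j) a))) > 6 * pi / \<delta>"
    using orbit_unbounded[of a] by (meson not_le)
  define f :: "complex \<Rightarrow> complex" where "f = exp ^^ n"
  have df: "deriv f a = (\<Prod>j<n. exp ((exp ^^ j) a))"
    unfolding f_def by (rule DERIV_imp_deriv[OF iter_deriv])
  have "norm (deriv f a) = (\<Prod>j<n. exp (Re ((exp ^^ j) a)))"
    unfolding df prod_norm[symmetric] by (simp add: norm_exp_eq_Re)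
  then have nd: "norm (deriv f a) > 6 * pi / \<delta>" using n by simp
  define r' where "r' = \<delta> * norm (deriv f a) / 12"
  have "\<delta> * norm (deriv f a) > \<delta> * (6 * pi / \<delta>)" using nd assms by (intro mult_strict_left_mono) auto
  then have r'pi: "r' > pi/2" using assms by (simp add: r'_def)
  obtain b where b: "ball b r' \<subseteq> f ` ball a \<delta>"
    using Bloch[of f a \<delta> r'] iter_holo assms unfolding f_def r'_def by blast
  define k where "k = \<lfloor>Im b / pi + 1/2\<rfloor>"
  have k1: "of_int k \<le> Im b / pi + 1/2" "Im b / pi + 1/2 < of_int k + 1" unfolding k_def by linarith+
  have "\<bar>Im b - of_int k * pi\<bar> \<le> pi/2"
  proof -
    have "of_int k * pi \<le> Im b + pi/2" using k1(1) pi_gt_zero by (simp add: field_simps)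
    moreover have "Im b - pi/2 < of_int k * pi" using k1(2) pi_gt_zero by (simp add: field_simps)
    ultimately show ?thesis by linarith
  qed
  define q where "q = Complex (Re b) (of_int k * pi)"
  have "dist b q = \<bar>Im b - of_int k * pi\<bar>"
    by (simp add: q_def dist_norm cmod_def)
  then have "q \<in> ball b r'" using r'pi \<open>\<bar>Im b - of_int k * pi\<bar> \<le> pi/2\<close> by simp
  then obtain z where z: "z \<in> ball a \<delta>" "f z = q" using b by blast
  have "sin (Im q) = 0" by (auto simp: q_def sin_zero_iff_int2)
  then show ?thesis using z unfolding f_def by blast
qed

fun hseq :: "real \<Rightarrow> real \<Rightarrow> nat \<Rightarrow> real" where
  "hseq c0 h0 0 = h0"
| "hseq c0 h0 (Suc j) = exp ((exp ^^ j) c0) * min (hseq c0 h0 j) 1 / 4"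

lemma box_iter:
  assumes V: "rbox c0 h0 \<subseteq> (exp ^^ m) ` U" and h0: "0 < h0"
  shows "rbox ((exp ^^ j) c0) (hseq c0 h0 j) \<subseteq> (exp ^^ (m + j)) ` (U::complex set) \<and> 0 < hseq c0 h0 j"
proof (induction j)
  case 0 then show ?case using assms by simp
next
  case (Suc j)
  let ?c = "(exp ^^ j) c0" and ?h = "hseq c0 h0 j"
  have hpos: "0 < min ?h 1" using Suc by simp
  have "rbox ((exp ^^ Suc j) c0) (hseq c0 h0 (Suc j)) = rbox (exp ?c) (exp ?c * min ?h 1 / 4)" by simp
  also have "\<dots> \<subseteq> exp ` rbox ?c (min ?h 1)" by (rule lemB) (use hpos in auto)
  also have "\<dots> \<subseteq> exp ` rbox ?c ?h" by (intro image_mono rbox_mono) simp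
  also have "\<dots> \<subseteq> exp ` ((exp ^^ (m + j)) ` U)" using Suc by (intro image_mono) simp
  also have "\<dots> = (exp ^^ (m + Suc j)) ` U" by (simp add: iter_img[symmetric])
  finally show ?case using hpos by simp
qed

lemma get_ann7:
  assumes "open (U::complex set)" "U \<noteq> {}"
  shows "\<exists>N0. ann (exp (-7)) (exp 7) \<subseteq> (exp ^^ N0) ` U"
proof -
  obtain a where a: "a \<in> U" using assms by blast
  then obtain \<delta> where \<delta>: "\<delta> > 0" "ball a \<delta> \<subseteq> U" using assms(1) open_contains_ball by blast
  obtain n z where nz: "z \<in> ball a \<delta>" "sin (Im ((exp ^^ n) z)) = 0" using crux[OF \<delta>(1)] by blast
  define p where "p = (exp ^^ Suc n) z"
  have "Im p = 0" using nz(2) by (simp add: p_def Im_exp)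
  have pV: "p \<in> (exp ^^ Suc n) ` U" using nz(1) \<delta>(2) by (auto simp: p_def)
  obtain e where e: "e > 0" "ball p e \<subseteq> (exp ^^ Suc n) ` U"
    using iter_open[OF assms(1), of "Suc n"] pV open_contains_ball by blast
  have "rbox (Re p) (e/2) \<subseteq> ball p e"
  proof
    fix q assume "q \<in> rbox (Re p) (e/2)"
    then have q: "\<bar>Re q - Re p\<bar> < e/2" "\<bar>Im q\<bar> < e/2" by (auto simp: rbox_def)
    have "dist p q \<le> \<bar>Re (p - q)\<bar> + \<bar>Im (p - q)\<bar>" unfolding dist_norm by (rule cmod_le)
    also have "\<dots> < e"
    proof -
      have "\<bar>Re (p - q)\<bar> = \<bar>Re q - Re p\<bar>" by (simp add: abs_minus_commute)
      moreover have "\<bar>Im (p - q)\<bar> = \<bar>Im q\<bar>" using \<open>Im p = 0\<close> by simp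
      ultimately show ?thesis using q by linarith
    qed
    finally show "q \<in> ball p e" by simp
  qed
  then have box0: "rbox (Re p) (e/2) \<subseteq> (exp ^^ Suc n) ` U" using e by blast
  define m where "m = Suc n"
  define c where "c = (\<lambda>j. ((exp::real\<Rightarrow>real) ^^ j) (Re p))"
  define h where "h = hseq (Re p) (e/2)"
  have BI: "rbox (c j) (h j) \<subseteq> (exp ^^ (m + j)) ` U" "0 < h j" for j
    using box_iter[OF box0[folded m_def], of j] e(1) by (auto simp: c_def h_def)
  have cS: "c (Suc j) = exp (c j)" for j by (simp add: c_def)
  have cge: "c (Suc j) \<ge> real j" for j
  proof (induction j)
    case 0 then show ?case by (simp add: cS less_imp_le)
  next
    case (Suc j)
    have "c (Suc (Suc j)) \<ge> 1 + c (Suc j)" unfolding cS[of "Suc j"] by (rule exp_ge_add_one_self)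
    then show ?case using Suc by simp
  qed
  define J where "J = (33::nat)"
  have hstep: "h (Suc j) \<ge> 8 * min (h j) 1" if jJ: "j \<ge> J" for j
  proof -
    obtain i where i: "j = Suc i" "i \<ge> 32" using jJ unfolding J_def by (cases j) auto
    have "c j \<ge> 32" using cge[of i] i by simp
    then have "exp (c j) \<ge> 32" using exp_ge_add_one_self[of "c j"] by linarith
    moreover have "0 \<le> min (h j) 1" using BI(2)[of j] by simp
    ultimately have "exp (c j) * min (h j) 1 \<ge> 32 * min (h j) 1" by (intro mult_right_mono) auto
    moreover have "h (Suc j) = exp (c j) * min (h j) 1 / 4" by (simp add: h_def c_def)
    ultimately show ?thesis by simp
  qed
  have hgrow: "h (J + k) \<ge> min (8^k * h J) 8" for k
  proof (induction k)
    case 0 then show ?case by simp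
  next
    case (Suc k)
    have "h (J + Suc k) \<ge> 8 * min (h (J + k)) 1" using hstep[of "J + k"] by simp
    moreover have "min (h (J + k)) 1 \<ge> min (8^k * h J) 1" using Suc by linarith
    ultimately show ?case by simp
  qed
  obtain k where k: "8 / h J < 8^k" using real_arch_pow[of 8 "8 / h J"] by auto
  then have "8 < 8^k * h J" using BI(2)[of J] by (simp add: divide_less_eq)
  then have hk: "h (J + k) \<ge> 8" using hgrow[of k] by linarith
  define jj where "jj = J + k"
  have cjj: "c jj \<ge> 0" using cge[of "J + k - 1"] unfolding jj_def J_def by simp
  have hjj: "h jj \<ge> 8" using hk by (simp add: jj_def)
  define C where "C = c jj"
  define H where "H = h jj"
  have box: "rbox C H \<subseteq> (exp ^^ (m + jj)) ` U" using BI(1)[of jj] by (simp add: C_def H_def)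
  have H8: "H \<ge> 8" "C \<ge> 0" using hjj cjj by (simp_all add: C_def H_def)
  have "ann (exp (C - H)) (exp (C + H)) \<subseteq> exp ` rbox C H" by (rule lemC) (use H8 pi_less_4 in linarith)
  also have "\<dots> \<subseteq> (exp ^^ Suc (m + jj)) ` U" unfolding iter_img using box by (rule image_mono)
  finally have A1: "ann (exp (C - H)) (exp (C + H)) \<subseteq> (exp ^^ Suc (m + jj)) ` U" .
  have "ann (exp (-7)) (exp 7) \<subseteq> exp ` ann (exp (C - H)) (exp (C + H))"
  proof (rule lemA)
    show "0 < exp (C - H)" by simp
    show "0 \<le> (7::real)" by simp
    have "exp (C - H) * exp (2*H) = exp (C + H)" by (simp add: exp_add[symmetric])
    moreover have "exp (2*H) \<ge> 2" using exp_ge_add_one_self[of "2*H"] H8 by linarith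
    ultimately have "exp (C - H) * 2 \<le> exp (C + H)" by (metis exp_gt_zero mult_left_mono less_imp_le)
    moreover have "exp (C + H) \<ge> 41"
    proof -
      have "1 + H + H^2/2 \<le> exp H" using H8 by (intro exp_lower_Taylor_quadratic) simp
      moreover have "H^2 \<ge> 8^2" using H8 by (intro power_mono) auto
      then have "H^2 \<ge> 64" by simp
      moreover have "exp H \<le> exp (C + H)" using H8 by simp
      ultimately show ?thesis using H8 by linarith
    qed
    ultimately show "exp (C - H) + 7 + 10 \<le> exp (C + H)" by linarith
  qed
  also have "\<dots> \<subseteq> (exp ^^ Suc (Suc (m + jj))) ` U" unfolding iter_img[of "Suc (m + jj)"] using A1 by (rule image_mono)
  finally show ?thesis by blast
qed

theorem mainTheorem12:
  fixes K U :: "complex set"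
  assumes "compact K" and "0 \<notin> K"
    and "open U" and "U \<noteq> {}"
  shows "\<exists>N::nat. \<forall>n\<ge>N. K \<subseteq> (exp ^^ n) ` U"
proof -
  obtain N0 where N0: "ann (exp (-7)) (exp 7) \<subseteq> (exp ^^ N0) ` U" using get_ann7 assms(3,4) by blast
  have chain: "ann (exp (-(7 + real k))) (exp (7 + real k)) \<subseteq> (exp ^^ (N0 + k)) ` U" for k
  proof (induction k)
    case 0 then show ?case using N0 by simp
  next
    case (Suc k)
    have "ann (exp (-(7 + real (Suc k)))) (exp (7 + real (Suc k)))
        = ann (exp (-((7 + real k) + 1))) (exp ((7 + real k) + 1))" by (simp add: add_ac)
    also have "\<dots> \<subseteq> exp ` ann (exp (-(7 + real k))) (exp (7 + real k))" by (rule ann_step) simp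
    also have "\<dots> \<subseteq> exp ` ((exp ^^ (N0 + k)) ` U)" using Suc by (rule image_mono)
    also have "\<dots> = (exp ^^ (N0 + Suc k)) ` U" by (simp add: iter_img[symmetric])
    finally show ?case .
  qed
  have "closed K" using assms(1) by (rule compact_imp_closed)
  then have "open (- K)" by (simp add: open_Compl)
  then obtain e where e: "e > 0" "ball 0 e \<subseteq> - K" using assms(2) open_contains_ball by blast
  have Ke: "norm z \<ge> e" if "z \<in> K" for z using e that by (force simp: subset_eq)
  obtain B where B: "\<And>z. z \<in> K \<Longrightarrow> norm z \<le> B" using compact_imp_bounded[OF assms(1)] bounded_iff by blast
  define X where "X = max B (1/e)"
  define k where "k = nat \<lceil>X\<rceil>"
  have "X \<le> real k" unfolding k_def by (rule real_nat_ceiling_ge)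
  then have k: "X \<le> 7 + real k" by simp
  have KX: "K \<subseteq> ann (exp (-X)) (exp X)"
  proof
    fix z assume z: "z \<in> K"
    have "exp X \<ge> 1 + X" by (rule exp_ge_add_one_self)
    then have "exp X > B" unfolding X_def by linarith
    then have 1: "norm z < exp X" using B[OF z] by linarith
    have "exp X > 1/e" using \<open>exp X \<ge> 1 + X\<close> unfolding X_def by linarith
    then have "exp (-X) < e" using e(1) by (simp add: exp_minus field_simps)
    then have 2: "exp (-X) < norm z" using Ke[OF z] by linarith
    show "z \<in> ann (exp (-X)) (exp X)" using 1 2 by (simp add: ann_def)
  qed
  show ?thesis
  proof (intro exI allI impI)
    fix n assume "N0 + k \<le> n"
    define k' where "k' = n - N0"
    have k': "n = N0 + k'" "k \<le> k'" using \<open>N0 + k \<le> n\<close> unfolding k'_def by auto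
    have "K \<subseteq> ann (exp (-X)) (exp X)" by (rule KX)
    also have "\<dots> \<subseteq> ann (exp (-(7 + real k'))) (exp (7 + real k'))" using k k' by (intro ann_mono) simp
    also have "\<dots> \<subseteq> (exp ^^ n) ` U" using chain[of k'] k' by simp
    finally show "K \<subseteq> (exp ^^ n) ` U" .
  qed
qed

end
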